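(* Assume in addition that $l$ is $\mu$-strongly convex on $\mathcal{X}$ for some $\mu>0$. Let $(y^{k},x^{k})_{k\ge0}$ be generated by SPDHG (as in the context) with step-sizes $\beta^{k+1}=\frac{1}{\mu(k+1)+L}$. For any saddle point $(y^*,x^* )$ of $\min_{x\in\mathcal{X}}\max_{y\in\mathcal{Y}}P(y,x)$ and every $k\ge0$, $$0 \geq \mathbb{E}\left[ P(y^{k+1},x^* ) - P(y^*,x^{k+1}) \right] \geq \frac{\mu(k+1)+L}{2}\mathbb{E}\| x^*-x^{k+1}\|^2 + \frac{1}{2s}\mathbb{E}\| y^*-y^{k+1}\|^2 -\frac{\mu k+L}{2}\mathbb{E}\| x^*-x^k\|^2 - \frac{1}{2s}\mathbb{E}\| y^*-y^k\|^2 - \frac{\lambda_{\max}(F^\top F)D_y^2+\sigma^2}{\mu(k+1)}.$$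
   Context: Setting: $\mathcal{X}\subset\mathbb{R}^d$ is a nonempty convex compact set, $\mathcal{Y}\subset\mathbb{R}^l$ is a nonempty convex compact set with diameter $D_y$ (so $\|y-y'\|\le D_y$ for all $y,y'\in\mathcal{Y}$), $F\in\mathbb{R}^{l\times d}$, and $\lambda_{\max}(F^\top F)$ denotes the largest eigenvalue of $F^\top F$. The loss is $l(x)=\mathbb{E}_\xi[l(x,\xi)]$, a convex, continuously differentiable function on $\mathcal{X}$ with $L$-Lipschitz gradient: $\|\nabla l(x_1)-\nabla l(x_2)\|\le L\|x_1-x_2\|$ for all $x_1,x_2\in\mathcal{X}$. $\mu$-strong convexity means $l(y)-l(x)-(y-x)^\top\nabla l(x)\ge\frac{\mu}{2}\|y-x\|^2$ for all $x,y\in\mathcal{X}$. The stochastic gradient $\nabla l(x,\xi)$ satisfies, for every $x\in\mathcal{X}$: $\mathbb{E}[\nabla l(x,\xi)]=\nabla l(x)$ and $\mathbb{E}\|\nabla l(x,\xi)-\nabla l(x)\|^2\le\sigma^2$ for a constant $\sigma>0$. The saddle function is $P(y,x)=l(x)+\langle y,Fx\rangle$ for $x\in\mathcal{X},y\in\mathcal{Y}$; a saddle point $(y^*,x^* )$ satisfies $P(y,x^* )\le P(y^*,x^* )\le P(y^*,x)$ for all $(y,x)\in\mathcal{Y}\times\mathcal{X}$. SPDHG: fix $s>0$, $x^0\in\mathcal{X}$, $y^0\in\mathcal{Y}$, and step-sizes $\beta^{k+1}>0$. For $k=0,1,2,\dots$, draw a sample $\xi^{k+1}$ independently of the past (i.i.d.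 samples), and set $$y^{k+1}=\arg\max_{y\in\mathcal{Y}}\Big\{P(y,x^k)-\tfrac{1}{2s}\|y-y^k\|^2\Big\},\qquad x^{k+1}=\Pi_{\mathcal{X}}\Big[x^k-\beta^{k+1}\big(\nabla l(x^k,\xi^{k+1})+F^\top y^{k+1}\big)\Big],$$ where $\Pi_{\mathcal{X}}$ is Euclidean projection onto $\mathcal{X}$. *)

theory Defs
  imports "HOL-Probability.Probability"
begin

definition saddle_fun :: "(real^'d \<Rightarrow> real) \<Rightarrow> real^'d^'m \<Rightarrow> real^'m \<Rightarrow> real^'d \<Rightarrow> real" where
  "saddle_fun l F y x = l x + y \<bullet> (F *v x)"

text \<open>Largest eigenvalue of a square real matrix (used for F^T F, which is symmetric PSD).\<close>
definition lambda_max :: "real^'n^'n \<Rightarrow> real" where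
  "lambda_max A = Max {e. \<exists>v. v \<noteq> 0 \<and> A *v v = e *\<^sub>R v}"

definition is_saddle_point ::
  "(real^'m \<Rightarrow> real^'d \<Rightarrow> real) \<Rightarrow> (real^'m) set \<Rightarrow> (real^'d) set \<Rightarrow> real^'m \<Rightarrow> real^'d \<Rightarrow> bool" where
  "is_saddle_point P Y X ys xs \<longleftrightarrow> ys \<in> Y \<and> xs \<in> X \<and>
     (\<forall>y\<in>Y. \<forall>x\<in>X. P y xs \<le> P ys xs \<and> P ys xs \<le> P ys x)"

end

theory Submission
  imports Defs
begin


lemma sym_AtA:
  fixes F :: "real^'d^'m" and u v :: "real^'d"
  shows "u \<bullet> ((transpose F ** F) *v v) = (F *v u) \<bullet> (F *v v)"
proof -
  have "(transpose F ** F) *v v = transpose F *v (F *v v)" by (simp add: matrix_vector_mul_assoc)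
  also have "u \<bullet> \<dots> = (F *v u) \<bullet> (F *v v)"
    by (metis dot_lmul_matrix inner_commute transpose_matrix_vector vector_transpose_matrix)
  finally show ?thesis .
qed

lemma eig_finite:
  fixes A :: "real^'n^'n"
  assumes symm: "\<And>u v. u \<bullet> (A *v v) = v \<bullet> (A *v u)"
  shows "finite {e. \<exists>v. v \<noteq> 0 \<and> A *v v = e *\<^sub>R v}"
proof -
  let ?S = "{e. \<exists>v. v \<noteq> 0 \<and> A *v v = e *\<^sub>R v}"
  define u where "u e = (SOME v. v \<noteq> 0 \<and> A *v v = e *\<^sub>R v)" for e
  have u: "u e \<noteq> 0 \<and> A *v u e = e *\<^sub>R u e" if "e \<in> ?S" for e
    using that someI_ex[of "\<lambda>v. v \<noteq> 0 \<and> A *v v = e *\<^sub>R v"] unfolding u_def by blast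
  have inj: "inj_on u ?S"
  proof (rule inj_onI)
    fix a b assume a: "a \<in> ?S" and b: "b \<in> ?S" and e: "u a = u b"
    then have "a *\<^sub>R u a = b *\<^sub>R u a" using u[OF a] u[OF b] by metis
    then show "a = b" using u[OF a] by (simp add: scaleR_cancel_right)
  qed
  have orth: "pairwise orthogonal (u ` ?S)"
  proof (rule pairwiseI)
    fix x y assume "x \<in> u ` ?S" "y \<in> u ` ?S" and ne: "x \<noteq> y"
    then obtain a b where a: "a \<in> ?S" and b: "b \<in> ?S" and xy: "x = u a" "y = u b" by blast
    show "orthogonal x y" unfolding xy
    proof -
    have "a \<noteq> b" using ne xy by auto
    have "a * (u a \<bullet> u b) = (A *v u a) \<bullet> u b" using u[OF a] by simp
    also have "\<dots> = u b \<bullet> (A *v u a)" by (simp add: inner_commute)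
    also have "\<dots> = u a \<bullet> (A *v u b)" using symm by metis
    also have "\<dots> = b * (u a \<bullet> u b)" using u[OF b] by simp
    finally have "(a - b) * (u a \<bullet> u b) = 0" by (simp add: algebra_simps)
    then show "orthogonal (u a) (u b)" using \<open>a \<noteq> b\<close> by (simp add: orthogonal_def)
  qed
  qed
  have "0 \<notin> u ` ?S" using u by force
  then have "independent (u ` ?S)" using orth pairwise_orthogonal_independent by blast
  then have "finite (u ` ?S)" using independent_bound by blast
  then show ?thesis using inj finite_imageD by blast
qed

lemma rayleigh:
  fixes A :: "real^'n^'n"
  assumes symm: "\<And>u v. u \<bullet> (A *v v) = v \<bullet> (A *v u)"
  shows "v \<bullet> (A *v v) \<le> lambda_max A * (norm v)\<^sup>2"
proof -
  let ?q = "\<lambda>v. v \<bullet> (A *v v)"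
  let ?Sp = "{v::real^'n. norm v = 1}"
  have cq: "continuous_on ?Sp ?q"
    using matrix_vector_mult_linear_continuous_on[of ?Sp A] by (intro continuous_on_inner continuous_on_id) simp
  have "compact ?Sp" using compact_sphere[of 0 1] by (simp add: sphere_def dist_norm)
  moreover have "?Sp \<noteq> {}" proof -
    have "norm (axis undefined (1::real) :: real^'n) = 1" by simp
    then show ?thesis by blast
  qed
  ultimately obtain v0 where v0: "norm v0 = 1" and mx: "\<And>w. norm w = 1 \<Longrightarrow> ?q w \<le> ?q v0"
    using continuous_attains_sup[OF _ _ cq] by force
  define m where "m = ?q v0"
  have all: "?q w \<le> m * (norm w)\<^sup>2" for w
  proof (cases "w = 0")
    case True then show ?thesis by simp
  next
    case False
    let ?w = "(1 / norm w) *\<^sub>R w"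
    have "norm ?w = 1" using False by simp
    then have "?q ?w \<le> m" using mx m_def by blast
    moreover have "?q ?w = ?q w / (norm w)\<^sup>2"
    proof -
      have "A *v ?w = (1 / norm w) *\<^sub>R (A *v w)" by (rule matrix_vector_mult_scaleR)
      then show ?thesis by (simp add: power2_eq_square)
    qed
    ultimately have "?q w / (norm w)\<^sup>2 \<le> m" by simp
    moreover have "(norm w)\<^sup>2 > 0" using False by simp
    ultimately show ?thesis by (simp add: divide_le_eq)
  qed
  define w where "w = m *\<^sub>R v0 - A *v v0"
  have expand: "m * (norm (v0 + t *\<^sub>R w))\<^sup>2 - ?q (v0 + t *\<^sub>R w) = 2 * t * (w \<bullet> w) + t\<^sup>2 * (m * (norm w)\<^sup>2 - ?q w)" for t
  proof -
    have s: "w \<bullet> (A *v v0) = v0 \<bullet> (A *v w)" using symm by blast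
    have "(norm (v0 + t *\<^sub>R w))\<^sup>2 = 1 + 2 * t * (v0 \<bullet> w) + t\<^sup>2 * (norm w)\<^sup>2"
    proof -
      have "(norm (v0 + t *\<^sub>R w))\<^sup>2 = (v0 + t *\<^sub>R w) \<bullet> (v0 + t *\<^sub>R w)" by (rule power2_norm_eq_inner)
      also have "\<dots> = v0 \<bullet> v0 + 2 * t * (v0 \<bullet> w) + t\<^sup>2 * (w \<bullet> w)"
        by (simp add: inner_add inner_commute algebra_simps power2_eq_square)
      finally show ?thesis using v0 by (simp add: power2_norm_eq_inner[symmetric])
    qed
    moreover have "?q (v0 + t *\<^sub>R w) = m + 2 * t * (w \<bullet> (A *v v0)) + t\<^sup>2 * ?q w"
      using s by (simp add: m_def matrix_vector_right_distrib matrix_vector_mult_scaleR inner_add inner_commute algebra_simps power2_eq_square)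
    moreover have "w \<bullet> w = m * (v0 \<bullet> w) - w \<bullet> (A *v v0)"
    proof -
      have "w \<bullet> (m *\<^sub>R v0 - A *v v0) = m * (v0 \<bullet> w) - w \<bullet> (A *v v0)"
        by (simp add: inner_diff_right inner_commute)
      then show ?thesis using w_def by simp
    qed
    moreover have "(norm w)\<^sup>2 = w \<bullet> w" by (rule power2_norm_eq_inner)
    ultimately show ?thesis using s m_def
      by (simp add: algebra_simps power2_eq_square) (metis distrib_left mult.assoc mult.commute)
  qed
  have "w = 0"
  proof (rule ccontr)
    assume "w \<noteq> 0"
    define a where "a = w \<bullet> w"
    define b where "b = m * (norm w)\<^sup>2 - ?q w"
    have a: "a > 0" using \<open>w \<noteq> 0\<close> a_def by simp
    have b: "b \<ge> 0" using all[of w] b_def by simp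
    define t where "t = - a / (b + 1)"
    have "0 \<le> m * (norm (v0 + t *\<^sub>R w))\<^sup>2 - ?q (v0 + t *\<^sub>R w)" using all by simp
    also have "\<dots> = 2 * t * a + t\<^sup>2 * b" using expand a_def b_def by simp
    also have "\<dots> = t * (2 * a + t * b)" by (simp add: algebra_simps power2_eq_square)
    also have "\<dots> < 0"
    proof (rule mult_neg_pos)
      show "t < 0" using a b by (simp add: t_def)
      have "a * b \<le> a * (b + 1)" using a by simp
      then have "a * b / (b + 1) \<le> a" using b by (simp add: divide_le_eq)
      then have "t * b \<ge> - a" by (simp add: t_def)
      then show "0 < 2 * a + t * b" using a by simp
    qed
    finally show False by simp
  qed
  then have "A *v v0 = m *\<^sub>R v0" by (simp add: w_def)
  moreover have "v0 \<noteq> 0" using v0 by auto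
  ultimately have "m \<in> {e. \<exists>v. v \<noteq> 0 \<and> A *v v = e *\<^sub>R v}" by blast
  then have "m \<le> lambda_max A" unfolding lambda_max_def using eig_finite[OF symm] by (rule Max_ge[rotated])
  then have "m * (norm v)\<^sup>2 \<le> lambda_max A * (norm v)\<^sup>2" by (simp add: mult_right_mono)
  with all[of v] show ?thesis by linarith
qed

lemma lam_nonneg:
  fixes F :: "real^'d^'m"
  shows "lambda_max (transpose F ** F) \<ge> 0"
proof -
  let ?A = "transpose F ** F"
  have symm: "\<And>a b. a \<bullet> (?A *v b) = b \<bullet> (?A *v a)" by (simp add: sym_AtA inner_commute)
  have "0 \<le> (norm (F *v axis undefined 1))\<^sup>2" by simp
  also have "\<dots> = axis undefined 1 \<bullet> (?A *v axis undefined 1)" by (simp add: sym_AtA power2_norm_eq_inner)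
  also have "\<dots> \<le> lambda_max ?A * (norm (axis undefined (1::real) :: real^'d))\<^sup>2" by (rule rayleigh[OF symm])
  finally show ?thesis by simp
qed

lemma FT_bound:
  fixes F :: "real^'d^'m" and u :: "real^'m"
  shows "(norm (transpose F *v u))\<^sup>2 \<le> lambda_max (transpose F ** F) * (norm u)\<^sup>2"
proof -
  let ?A = "transpose F ** F"
  let ?v = "transpose F *v u"
  have symm: "\<And>a b. a \<bullet> (?A *v b) = b \<bullet> (?A *v a)" by (simp add: sym_AtA inner_commute)
  have lam: "lambda_max ?A \<ge> 0"
  proof -
    have "0 \<le> (norm (F *v axis undefined 1))\<^sup>2" by simp
    also have "\<dots> = axis undefined 1 \<bullet> (?A *v axis undefined 1)" by (simp add: sym_AtA power2_norm_eq_inner)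
    also have "\<dots> \<le> lambda_max ?A * (norm (axis undefined (1::real) :: real^'d))\<^sup>2" by (rule rayleigh[OF symm])
    finally show ?thesis by simp
  qed
  have "(norm ?v)\<^sup>2 = u \<bullet> (F *v ?v)"
    by (metis dot_lmul_matrix power2_norm_eq_inner transpose_matrix_vector)
  also have "\<dots> \<le> norm u * norm (F *v ?v)" by (rule norm_cauchy_schwarz)
  finally have 1: "(norm ?v)\<^sup>2 \<le> norm u * norm (F *v ?v)" .
  have "(norm (F *v ?v))\<^sup>2 = ?v \<bullet> (?A *v ?v)" by (simp add: sym_AtA power2_norm_eq_inner)
  also have "\<dots> \<le> lambda_max ?A * (norm ?v)\<^sup>2" by (rule rayleigh[OF symm])
  finally have 2: "(norm (F *v ?v))\<^sup>2 \<le> lambda_max ?A * (norm ?v)\<^sup>2" .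
  show ?thesis
  proof (cases "norm ?v = 0")
    case True then show ?thesis using lam by simp
  next
    case False
    have "((norm ?v)\<^sup>2)\<^sup>2 \<le> (norm u)\<^sup>2 * (norm (F *v ?v))\<^sup>2"
      using 1 by (metis power_mono power_mult_distrib zero_le_power2)
    also have "\<dots> \<le> (norm u)\<^sup>2 * (lambda_max ?A * (norm ?v)\<^sup>2)" using 2 by (simp add: mult_left_mono)
    finally have "(norm ?v)\<^sup>2 * (norm ?v)\<^sup>2 \<le> (lambda_max ?A * (norm u)\<^sup>2) * (norm ?v)\<^sup>2"
      by (simp add: power2_eq_square algebra_simps)
    moreover have "(norm ?v)\<^sup>2 > 0" using False by simp
    ultimately show ?thesis by (rule mult_right_le_imp_le)
  qed
qed



lemma descent:
  fixes l :: "real^'d \<Rightarrow> real" and gl :: "real^'d \<Rightarrow> real^'d"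
  assumes cX: "convex X"
    and l_deriv: "\<forall>z\<in>X. (l has_derivative (\<lambda>h. gl z \<bullet> h)) (at z within X)"
    and gl_lip: "\<forall>x1\<in>X. \<forall>x2\<in>X. norm (gl x1 - gl x2) \<le> L * norm (x1 - x2)"
    and L: "0 \<le> L"
    and a: "a \<in> X" and b: "b \<in> X"
  shows "l b \<le> l a + gl a \<bullet> (b - a) + L / 2 * (norm (b - a))\<^sup>2"
proof -
  define p where "p t = a + t *\<^sub>R (b - a)" for t :: real
  have pX: "p t \<in> X" if "t \<in> {0..1}" for t
  proof -
    have "p t = (1 - t) *\<^sub>R a + t *\<^sub>R b" by (simp add: p_def algebra_simps)
    then show ?thesis using convexD_alt[OF cX a b, of t] that by auto
  qed
  define \<phi> where "\<phi> t = l (p t) - t * (gl a \<bullet> (b - a)) - L / 2 * t\<^sup>2 * (norm (b - a))\<^sup>2" for t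
  define \<phi>' where "\<phi>' t = (\<lambda>h. h * (gl (p t) \<bullet> (b - a) - gl a \<bullet> (b - a) - L * t * (norm (b - a))\<^sup>2))" for t
  have der: "(\<phi> has_derivative \<phi>' t) (at t within {0..1})" if t: "0 \<le> t" "t \<le> 1" for t
  proof -
    have dp: "(p has_derivative (\<lambda>h. h *\<^sub>R (b - a))) (at t within {0..1})"
      unfolding p_def by (auto intro!: derivative_eq_intros)
    have dl: "((\<lambda>t. l (p t)) has_derivative (\<lambda>h. gl (p t) \<bullet> (h *\<^sub>R (b - a)))) (at t within {0..1})"
      by (rule has_derivative_in_compose2[where g=l and g'="\<lambda>z h. gl z \<bullet> h" and t=X, OF _ _ _ dp])
         (use l_deriv pX t in auto)
    show ?thesis unfolding \<phi>_def \<phi>'_def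
      apply (rule derivative_eq_intros dl | (auto intro!: derivative_eq_intros)[])+
      apply (simp add: algebra_simps power2_eq_square)
      done
  qed
  obtain t where t: "t \<in> {0..1}" and eq: "\<phi> 1 - \<phi> 0 = \<phi>' t (1 - 0)"
    using mvt_very_simple[of 0 1 \<phi> \<phi>'] der by auto
  have "gl (p t) \<bullet> (b - a) - gl a \<bullet> (b - a) = (gl (p t) - gl a) \<bullet> (b - a)" by (simp add: inner_diff_left)
  also have "\<dots> \<le> norm (gl (p t) - gl a) * norm (b - a)" by (rule norm_cauchy_schwarz)
  also have "\<dots> \<le> L * norm (p t - a) * norm (b - a)"
    using gl_lip pX[OF t] a by (intro mult_right_mono) auto
  also have "\<dots> = L * t * (norm (b - a))\<^sup>2" using t by (simp add: p_def power2_eq_square)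
  finally have "\<phi>' t 1 \<le> 0" by (simp add: \<phi>'_def)
  then have "\<phi> 1 \<le> \<phi> 0" using eq by simp
  then show ?thesis by (simp add: \<phi>_def p_def)
qed



lemma young:
  fixes u d :: "'a::real_inner"
  assumes "p > 0"
  shows "u \<bullet> d \<le> (norm u)\<^sup>2 / p + p / 4 * (norm d)\<^sup>2"
proof -
  have "0 \<le> (norm ((2 / p) *\<^sub>R u - d))\<^sup>2" by simp
  also have "\<dots> = 4 / p\<^sup>2 * (norm u)\<^sup>2 - 4 / p * (u \<bullet> d) + (norm d)\<^sup>2"
    unfolding power2_norm_eq_inner by (simp add: inner_diff inner_commute algebra_simps power2_eq_square)
  finally have "0 \<le> p / 4 * (4 / p\<^sup>2 * (norm u)\<^sup>2 - 4 / p * (u \<bullet> d) + (norm d)\<^sup>2)"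
    using assms by simp
  also have "\<dots> = (norm u)\<^sup>2 / p - u \<bullet> d + p / 4 * (norm d)\<^sup>2"
    using assms by (simp add: field_simps power2_eq_square)
  finally show ?thesis by simp
qed

lemma polar2:
  fixes u v w :: "'a::real_inner"
  shows "2 * ((u - v) \<bullet> (w - v)) = (norm (u - v))\<^sup>2 + (norm (w - v))\<^sup>2 - (norm (w - u))\<^sup>2"
  by (simp add: power2_norm_eq_inner inner_diff inner_commute algebra_simps)

lemma pointwise:
  fixes X :: "(real^'d) set" and Y :: "(real^'m) set" and F :: "real^'d^'m"
    and l :: "real^'d \<Rightarrow> real" and gl :: "real^'d \<Rightarrow> real^'d"
    and L \<mu> s :: real and k :: nat
    and a xs a' g :: "real^'d" and b ys b' :: "real^'m"
  assumes cX: "convex X" "closed X" and cY: "convex Y" "closed Y" "bounded Y"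
    and l_deriv: "\<forall>z\<in>X. (l has_derivative (\<lambda>h. gl z \<bullet> h)) (at z within X)"
    and L_nonneg: "0 \<le> L"
    and gl_lip: "\<forall>x1\<in>X. \<forall>x2\<in>X. norm (gl x1 - gl x2) \<le> L * norm (x1 - x2)"
    and mu_pos: "0 < \<mu>"
    and strong: "\<forall>u\<in>X. \<forall>v\<in>X. l v - l u - (v - u) \<bullet> gl u \<ge> \<mu> / 2 * (norm (v - u))\<^sup>2"
    and s_pos: "0 < s"
    and a: "a \<in> X" and xs: "xs \<in> X" and ys: "ys \<in> Y"
    and b': "b' = closest_point Y (b + s *\<^sub>R (F *v a))"
    and a': "a' = closest_point X (a - (1 / (\<mu> * (real k + 1) + L)) *\<^sub>R (g + transpose F *v b'))"
  shows "saddle_fun l F b' xs - saddle_fun l F ys a'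
      \<ge> (\<mu> * (real k + 1) + L) / 2 * (norm (xs - a'))\<^sup>2
        + 1 / (2 * s) * (norm (ys - b'))\<^sup>2
        - (\<mu> * real k + L) / 2 * (norm (xs - a))\<^sup>2
        - 1 / (2 * s) * (norm (ys - b))\<^sup>2
        - (lambda_max (transpose F ** F) * (diameter Y)\<^sup>2 + (norm (g - gl a))\<^sup>2) / (\<mu> * (real k + 1))
        + (g - gl a) \<bullet> (a - xs)"
proof -
  have Xne: "X \<noteq> {}" using a by auto
  have Yne: "Y \<noteq> {}" using ys by auto
  define c where "c = \<mu> * (real k + 1) + L"
  define p where "p = \<mu> * (real k + 1)"
  have p: "p > 0" using mu_pos by (simp add: p_def)
  have c: "c > 0" using p L_nonneg by (simp add: c_def p_def)
  have cp: "c = p + L" by (simp add: c_def p_def)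
  define u where "u = transpose F *v b'"
  define \<delta> where "\<delta> = g - gl a"
  define \<Lambda> where "\<Lambda> = lambda_max (transpose F ** F)"
  define w where "w = transpose F *v (ys - b')"
  have a'X: "a' \<in> X" unfolding a' using closest_point_in_set[OF cX(2) Xne] .
  have b'Y: "b' \<in> Y" unfolding b' using closest_point_in_set[OF cY(2) Yne] .
  define Nd where "Nd = (norm (a' - a))\<^sup>2"
  define Na' where "Na' = (norm (xs - a'))\<^sup>2"
  define Na where "Na = (norm (xs - a))\<^sup>2"
  define Nb' where "Nb' = (norm (ys - b'))\<^sup>2"
  define Nyb where "Nyb = (norm (ys - b))\<^sup>2"
  define Nb where "Nb = (norm (b' - b))\<^sup>2"
  have "((a - (1 / c) *\<^sub>R (g + u)) - a') \<bullet> (xs - a') \<le> 0"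
    using closest_point_dot[OF cX xs, of "a - (1 / c) *\<^sub>R (g + u)"] by (simp add: a' c_def u_def)
  then have "(a - a') \<bullet> (xs - a') - (1 / c) * ((g + u) \<bullet> (xs - a')) \<le> 0"
    by (simp add: inner_diff_left)
  then have f1a: "c * ((a - a') \<bullet> (xs - a')) \<le> (g + u) \<bullet> (xs - a')"
    using c by (simp add: field_simps)
  have eq: "Nd + Na' - Na = 2 * ((a - a') \<bullet> (xs - a'))"
    using polar2[of a a' xs] by (simp add: Nd_def Na'_def Na_def norm_minus_commute)
  have f1c: "c * (Nd + Na' - Na) = 2 * (c * ((a - a') \<bullet> (xs - a')))"
    by (simp only: eq)
  have f1d: "c * Nd + c * Na' - c * Na = c * (Nd + Na' - Na)" by (simp add: algebra_simps)
  have f1e: "(g + u) \<bullet> (xs - a') = g \<bullet> (xs - a') + u \<bullet> (xs - a')" by (simp add: inner_add_left)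
  have f1: "c * Nd + c * Na' - c * Na \<le> 2 * (g \<bullet> (xs - a')) + 2 * (u \<bullet> (xs - a'))"
    using f1a f1c f1d f1e by linarith
  have f3: "l a' \<le> l a + gl a \<bullet> (a' - a) + L / 2 * Nd"
    using descent[OF cX(1) l_deriv gl_lip L_nonneg a a'X] by (simp add: Nd_def)
  have f4: "l xs - l a - (xs - a) \<bullet> gl a \<ge> \<mu> / 2 * Na"
    using strong a xs by (simp add: Na_def)
  have I1: "gl a \<bullet> (a' - a) - (xs - a) \<bullet> gl a = - (g \<bullet> (xs - a')) - \<delta> \<bullet> (a' - a) - \<delta> \<bullet> (a - xs)"
    by (simp add: \<delta>_def inner_diff inner_commute algebra_simps)
  have "((b + s *\<^sub>R (F *v a)) - b') \<bullet> (ys - b') \<le> 0"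
    using closest_point_dot[OF cY(1,2) ys, of "b + s *\<^sub>R (F *v a)"] by (simp add: b')
  then have "(b - b') \<bullet> (ys - b') + s * ((F *v a) \<bullet> (ys - b')) \<le> 0"
    by (simp add: inner_diff_left inner_add_left algebra_simps)
  moreover have "2 * ((b - b') \<bullet> (ys - b')) = Nb + Nb' - Nyb"
    using polar2[of b b' ys] by (simp add: Nb_def Nb'_def Nyb_def norm_minus_commute)
  ultimately have "Nb + Nb' - Nyb + 2 * s * ((F *v a) \<bullet> (ys - b')) \<le> 0" by simp
  moreover have "Nb \<ge> 0" by (simp add: Nb_def)
  ultimately have "2 * s * ((F *v a) \<bullet> (ys - b')) \<le> Nyb - Nb'" by simp
  then have f2: "(F *v a) \<bullet> (ys - b') \<le> Nyb / (2 * s) - Nb' / (2 * s)"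
    using s_pos by (simp add: field_simps)
  have U1: "u \<bullet> (xs - a') = b' \<bullet> (F *v xs) - b' \<bullet> (F *v a')"
    by (simp add: u_def inner_diff_right dot_lmul_matrix)
  have W: "ys \<bullet> (F *v a') - b' \<bullet> (F *v a') = (F *v a) \<bullet> (ys - b') + w \<bullet> (a' - a)"
  proof -
    have "w \<bullet> (a' - a) = (ys - b') \<bullet> (F *v (a' - a))"
      by (simp add: w_def dot_lmul_matrix)
    then show ?thesis by (simp add: inner_diff matrix_vector_mult_diff_distrib inner_commute algebra_simps)
  qed
  have Y1: "\<delta> \<bullet> (a' - a) \<ge> - ((norm \<delta>)\<^sup>2 / p + p / 4 * Nd)"
    using young[OF p, of "-\<delta>" "a' - a"] by (simp add: Nd_def)
  have Y2: "w \<bullet> (a' - a) \<le> (norm w)\<^sup>2 / p + p / 4 * Nd"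
    using young[OF p, of w "a' - a"] by (simp add: Nd_def)
  have Wb: "(norm w)\<^sup>2 \<le> \<Lambda> * (diameter Y)\<^sup>2"
  proof -
    have "(norm w)\<^sup>2 \<le> \<Lambda> * (norm (ys - b'))\<^sup>2" unfolding w_def \<Lambda>_def by (rule FT_bound)
    also have "\<dots> \<le> \<Lambda> * (diameter Y)\<^sup>2"
    proof (rule mult_left_mono)
      have "norm (ys - b') \<le> diameter Y"
        using diameter_bounded_bound[OF cY(3) ys b'Y] by (simp add: dist_norm)
      then show "(norm (ys - b'))\<^sup>2 \<le> (diameter Y)\<^sup>2" by (simp add: power_mono)
      show "0 \<le> \<Lambda>" unfolding \<Lambda>_def by (rule lam_nonneg)
    qed
    finally show ?thesis .
  qed
  have LHS: "saddle_fun l F b' xs - saddle_fun l F ys a'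
     = l xs - l a' + u \<bullet> (xs - a') - (F *v a) \<bullet> (ys - b') - w \<bullet> (a' - a)"
    using U1 W by (simp add: saddle_fun_def)
  have cNd: "c * Nd = p * Nd + L * Nd" by (simp add: cp algebra_simps)
  have key: "saddle_fun l F b' xs - saddle_fun l F ys a'
     \<ge> c / 2 * Na' - (c / 2 - \<mu> / 2) * Na + Nb' / (2 * s) - Nyb / (2 * s)
       - ((norm \<delta>)\<^sup>2 + (norm w)\<^sup>2) / p + \<delta> \<bullet> (a - xs)"
    using LHS f1 f2 f3 f4 I1 Y1 Y2 cNd by (simp add: algebra_simps add_divide_distrib)
  have "((norm \<delta>)\<^sup>2 + (norm w)\<^sup>2) / p \<le> (\<Lambda> * (diameter Y)\<^sup>2 + (norm \<delta>)\<^sup>2) / p"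
    using Wb p by (simp add: divide_right_mono)
  moreover have "(c / 2 - \<mu> / 2) * Na = (\<mu> * real k + L) / 2 * Na" by (simp add: c_def algebra_simps)
  moreover have "Nb' / (2 * s) = 1 / (2 * s) * Nb'" "Nyb / (2 * s) = 1 / (2 * s) * Nyb" by simp_all
  ultimately have fin: "saddle_fun l F b' xs - saddle_fun l F ys a'
     \<ge> c / 2 * Na' + 1 / (2 * s) * Nb' - (\<mu> * real k + L) / 2 * Na - 1 / (2 * s) * Nyb
       - (\<Lambda> * (diameter Y)\<^sup>2 + (norm \<delta>)\<^sup>2) / p + \<delta> \<bullet> (a - xs)"
    using key by linarith
  show ?thesis
    apply (fold Na'_def Na_def Nb'_def Nyb_def \<delta>_def \<Lambda>_def)
    apply (fold c_def)
    apply (fold p_def)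
    using fin by linarith
qed



lemma le_one_plus_sq: "(t::real) \<le> 1 + t\<^sup>2"
proof (cases "t \<le> 1")
  case True then show ?thesis by (smt (verit) zero_le_power2)
next
  case False then have "t * 1 \<le> t * t" by (intro mult_left_mono) auto
  then show ?thesis by (simp add: power2_eq_square)
qed

lemma (in prob_space) indep_expect:
  fixes Z :: "'a \<Rightarrow> real^'d" and \<xi>k :: "'a \<Rightarrow> 'b" and G :: "real^'d \<Rightarrow> 'b \<Rightarrow> real^'d"
    and gl :: "real^'d \<Rightarrow> real^'d" and X :: "(real^'d) set" and xs :: "real^'d"
    and W1 W2 :: "'a \<Rightarrow> 'c" and \<phi> :: "'c \<Rightarrow> real^'d" and \<psi> :: "'c \<Rightarrow> 'b"
  assumes ind: "indep_var S W1 T W2"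
    and \<phi>m[measurable]: "\<phi> \<in> borel_measurable S" and \<psi>m[measurable]: "\<psi> \<in> measurable T N"
    and Zeq: "\<forall>\<omega>. Z \<omega> = \<phi> (W1 \<omega>)" and \<xi>eq: "\<forall>\<omega>. \<xi>k \<omega> = \<psi> (W2 \<omega>)"
    and \<phi>X: "\<forall>c \<in> space S. \<phi> c \<in> X" and cX: "compact X" and gl_cont: "continuous_on X gl"
    and G_meas: "(\<lambda>(z, e). G z e) \<in> borel_measurable (borel \<Otimes>\<^sub>M N)"
    and unb: "\<forall>z\<in>X. integrable M (\<lambda>\<omega>. G z (\<xi>k \<omega>)) \<and> (\<integral>\<omega>. G z (\<xi>k \<omega>) \<partial>M) = gl z"
    and var: "\<forall>z\<in>X. integrable M (\<lambda>\<omega>. (norm (G z (\<xi>k \<omega>) - gl z))\<^sup>2) \<and>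
                        (\<integral>\<omega>. (norm (G z (\<xi>k \<omega>) - gl z))\<^sup>2 \<partial>M) \<le> \<sigma>\<^sup>2"
  shows "integrable M (\<lambda>\<omega>. (norm (G (Z \<omega>) (\<xi>k \<omega>) - gl (Z \<omega>)))\<^sup>2)"
    and "(\<integral>\<omega>. (norm (G (Z \<omega>) (\<xi>k \<omega>) - gl (Z \<omega>)))\<^sup>2 \<partial>M) \<le> \<sigma>\<^sup>2"
    and "integrable M (\<lambda>\<omega>. (G (Z \<omega>) (\<xi>k \<omega>) - gl (Z \<omega>)) \<bullet> (Z \<omega> - xs))"
    and "(\<integral>\<omega>. (G (Z \<omega>) (\<xi>k \<omega>) - gl (Z \<omega>)) \<bullet> (Z \<omega> - xs) \<partial>M) = 0"
proof -
  have rv1[measurable]: "W1 \<in> measurable M S" using indep_var_rv1[OF ind] .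
  have rv2[measurable]: "W2 \<in> measurable M T" using indep_var_rv2[OF ind] .
  have Zf: "Z = (\<lambda>\<omega>. \<phi> (W1 \<omega>))" using Zeq by auto
  have \<xi>f: "\<xi>k = (\<lambda>\<omega>. \<psi> (W2 \<omega>))" using \<xi>eq by auto
  have ZX: "Z \<omega> \<in> X" if "\<omega> \<in> space M" for \<omega>
    using \<phi>X Zeq measurable_space[OF rv1 that] by auto
  have Xb[measurable]: "X \<in> sets borel" using cX by (simp add: compact_imp_closed)
  define gl' where "gl' z = indicator X z *\<^sub>R gl z" for z
  have glm[measurable]: "gl' \<in> borel_measurable borel"
    unfolding gl'_def using borel_measurable_continuous_on_indicator[OF Xb gl_cont] .
  have gl'X: "z \<in> X \<Longrightarrow> gl' z = gl z" for z by (simp add: gl'_def)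
  have Gm[measurable]: "(\<lambda>p. G (fst p) (snd p)) \<in> borel_measurable (borel \<Otimes>\<^sub>M N)"
    using G_meas by (simp add: case_prod_beta')
  define PZ where "PZ = distr M S W1"
  define P\<xi> where "P\<xi> = distr M T W2"
  interpret PZ: prob_space PZ unfolding PZ_def by (rule prob_space_distr) measurable
  interpret P\<xi>: prob_space P\<xi> unfolding P\<xi>_def by (rule prob_space_distr) measurable
  interpret PP: pair_prob_space PZ P\<xi> ..
  have joint: "PZ \<Otimes>\<^sub>M P\<xi> = distr M (S \<Otimes>\<^sub>M T) (\<lambda>\<omega>. (W1 \<omega>, W2 \<omega>))"
    using ind unfolding indep_var_distribution_eq PZ_def P\<xi>_def by blast
  have AEX: "AE c in PZ. \<phi> c \<in> X"
    unfolding PZ_def using \<phi>X by (intro AE_I2) auto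
  have sPZ[simp]: "sets PZ = sets S" "space PZ = space S" by (simp_all add: PZ_def)
  have sPX[simp]: "sets P\<xi> = sets T" "space P\<xi> = space T" by (simp_all add: P\<xi>_def)
  have sPP: "sets (PZ \<Otimes>\<^sub>M P\<xi>) = sets (S \<Otimes>\<^sub>M T)"
    by (intro sets_pair_measure_cong) simp_all
  have pm: "(\<lambda>x. (\<phi> (fst x), \<psi> (snd x))) \<in> measurable (S \<Otimes>\<^sub>M T) (borel \<Otimes>\<^sub>M N)" by measurable
  have Gc[measurable]: "(\<lambda>x. G (\<phi> (fst x)) (\<psi> (snd x))) \<in> borel_measurable (S \<Otimes>\<^sub>M T)"
    using measurable_compose[OF pm Gm] by (simp add: comp_def)
  have fm[measurable]: "(\<lambda>x. \<phi> (fst x)) \<in> borel_measurable (S \<Otimes>\<^sub>M T)" by measurable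
  have gc[measurable]: "(\<lambda>x. gl' (\<phi> (fst x))) \<in> borel_measurable (S \<Otimes>\<^sub>M T)"
    using measurable_compose[OF fm glm] by (simp add: comp_def)
  have Gz[measurable]: "(\<lambda>e. G z e) \<in> borel_measurable N" for z
  proof -
    have "(\<lambda>e. (z, e)) \<in> measurable N (borel \<Otimes>\<^sub>M N)" by measurable
    from measurable_compose[OF this Gm] show ?thesis by (simp add: comp_def)
  qed
  define h1 where "h1 p = (norm (G (\<phi> (fst p)) (\<psi> (snd p)) - gl' (\<phi> (fst p))))\<^sup>2" for p
  have h1m[measurable]: "h1 \<in> borel_measurable (S \<Otimes>\<^sub>M T)" unfolding h1_def by measurable
  have h1\<omega>: "h1 (W1 \<omega>, W2 \<omega>) = (norm (G (Z \<omega>) (\<xi>k \<omega>) - gl (Z \<omega>)))\<^sup>2" if "\<omega> \<in> space M" for \<omega>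
    using ZX[OF that] gl'X by (simp add: h1_def Zeq \<xi>eq)
  have "(\<integral>\<^sup>+\<omega>. ennreal (h1 (W1 \<omega>, W2 \<omega>)) \<partial>M) = (\<integral>\<^sup>+p. ennreal (h1 p) \<partial>(PZ \<Otimes>\<^sub>M P\<xi>))"
    unfolding joint by (subst nn_integral_distr) measurable
  also have "\<dots> = (\<integral>\<^sup>+z. \<integral>\<^sup>+e. ennreal (h1 (z, e)) \<partial>P\<xi> \<partial>PZ)"
    by (rule P\<xi>.nn_integral_fst[symmetric]) (simp add: measurable_cong_sets[OF sPP refl])
  also have "\<dots> \<le> (\<integral>\<^sup>+z. ennreal (\<sigma>\<^sup>2) \<partial>PZ)"
  proof (rule nn_integral_mono_AE)
    show "AE z in PZ. (\<integral>\<^sup>+e. ennreal (h1 (z, e)) \<partial>P\<xi>) \<le> ennreal (\<sigma>\<^sup>2)"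
      using AEX
    proof eventually_elim
      case (elim z)
      have "(\<integral>\<^sup>+e. ennreal (h1 (z, e)) \<partial>P\<xi>) = (\<integral>\<^sup>+\<omega>. ennreal (h1 (z, W2 \<omega>)) \<partial>M)"
        unfolding P\<xi>_def by (subst nn_integral_distr) (auto simp: h1_def)
      also have "\<dots> = (\<integral>\<^sup>+\<omega>. ennreal ((norm (G (\<phi> z) (\<xi>k \<omega>) - gl (\<phi> z)))\<^sup>2) \<partial>M)"
        using elim gl'X by (simp add: h1_def \<xi>eq)
      also have "\<dots> = ennreal (\<integral>\<omega>. (norm (G (\<phi> z) (\<xi>k \<omega>) - gl (\<phi> z)))\<^sup>2 \<partial>M)"
        using var elim by (intro nn_integral_eq_integral) auto
      also have "\<dots> \<le> ennreal (\<sigma>\<^sup>2)" using var elim by (simp add: ennreal_leI)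
      finally show ?case .
    qed
  qed
  also have "\<dots> = ennreal (\<sigma>\<^sup>2)" using PZ.emeasure_space_1 by simp
  finally have nn1': "(\<integral>\<^sup>+\<omega>. ennreal (h1 (W1 \<omega>, W2 \<omega>)) \<partial>M) \<le> ennreal (\<sigma>\<^sup>2)" .
  have nn1: "(\<integral>\<^sup>+\<omega>. ennreal ((norm (G (Z \<omega>) (\<xi>k \<omega>) - gl (Z \<omega>)))\<^sup>2) \<partial>M) \<le> ennreal (\<sigma>\<^sup>2)"
  proof -
    have "(\<integral>\<^sup>+\<omega>. ennreal ((norm (G (Z \<omega>) (\<xi>k \<omega>) - gl (Z \<omega>)))\<^sup>2) \<partial>M) = (\<integral>\<^sup>+\<omega>. ennreal (h1 (W1 \<omega>, W2 \<omega>)) \<partial>M)"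
      by (rule nn_integral_cong) (simp add: h1\<omega>)
    then show ?thesis using nn1' by simp
  qed
  have m1: "(\<lambda>\<omega>. (norm (G (Z \<omega>) (\<xi>k \<omega>) - gl (Z \<omega>)))\<^sup>2) \<in> borel_measurable M"
  proof -
    have "(\<lambda>\<omega>. h1 (W1 \<omega>, W2 \<omega>)) \<in> borel_measurable M" by measurable
    then show ?thesis by (rule measurable_cong[THEN iffD1, rotated]) (simp add: h1\<omega>)
  qed
  show int1: "integrable M (\<lambda>\<omega>. (norm (G (Z \<omega>) (\<xi>k \<omega>) - gl (Z \<omega>)))\<^sup>2)"
    unfolding integrable_iff_bounded using m1 nn1 by (simp add: le_less_trans)
  show "(\<integral>\<omega>. (norm (G (Z \<omega>) (\<xi>k \<omega>) - gl (Z \<omega>)))\<^sup>2 \<partial>M) \<le> \<sigma>\<^sup>2"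
    using nn1 m1 by (subst integral_eq_nn_integral) (auto intro: enn2real_leI)
  obtain R where R: "\<And>z. z \<in> X \<Longrightarrow> norm (z - xs) \<le> R"
  proof -
    obtain B where "\<forall>z\<in>X. norm z \<le> B" using compact_imp_bounded[OF cX] bounded_iff by blast
    then show ?thesis using that[of "B + norm xs"] by (meson add_mono norm_triangle_ineq4 order_trans order_refl)
  qed
  define f2 where "f2 p = (G (\<phi> (fst p)) (\<psi> (snd p)) - gl' (\<phi> (fst p))) \<bullet> (\<phi> (fst p) - xs)" for p
  have f2m[measurable]: "f2 \<in> borel_measurable (S \<Otimes>\<^sub>M T)" unfolding f2_def by measurable
  have f2\<omega>: "f2 (W1 \<omega>, W2 \<omega>) = (G (Z \<omega>) (\<xi>k \<omega>) - gl (Z \<omega>)) \<bullet> (Z \<omega> - xs)" if "\<omega> \<in> space M" for \<omega>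
    using ZX[OF that] gl'X by (simp add: f2_def Zeq \<xi>eq)
  have int2: "integrable M (\<lambda>\<omega>. f2 (W1 \<omega>, W2 \<omega>))"
  proof (rule Bochner_Integration.integrable_bound)
    show "integrable M (\<lambda>\<omega>. R * (1 + (norm (G (Z \<omega>) (\<xi>k \<omega>) - gl (Z \<omega>)))\<^sup>2))"
      using int1 by auto
    show "(\<lambda>\<omega>. f2 (W1 \<omega>, W2 \<omega>)) \<in> borel_measurable M" by measurable
    show "AE \<omega> in M. norm (f2 (W1 \<omega>, W2 \<omega>)) \<le> norm (R * (1 + (norm (G (Z \<omega>) (\<xi>k \<omega>) - gl (Z \<omega>)))\<^sup>2))"
    proof (intro AE_I2)
      fix \<omega> assume \<omega>: "\<omega> \<in> space M"
      let ?d = "G (Z \<omega>) (\<xi>k \<omega>) - gl (Z \<omega>)"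
      have "norm (f2 (W1 \<omega>, W2 \<omega>)) \<le> norm ?d * norm (Z \<omega> - xs)"
        unfolding f2\<omega>[OF \<omega>] by (simp add: Cauchy_Schwarz_ineq2)
      also have "\<dots> \<le> (1 + (norm ?d)\<^sup>2) * R"
        using R[OF ZX[OF \<omega>]] le_one_plus_sq[of "norm ?d"] by (intro mult_mono) auto
      also have "\<dots> \<le> norm (R * (1 + (norm ?d)\<^sup>2))" by (simp add: mult.commute)
      finally show "norm (f2 (W1 \<omega>, W2 \<omega>)) \<le> norm (R * (1 + (norm ?d)\<^sup>2))" .
    qed
  qed
  have int2': "integrable M (\<lambda>\<omega>. (G (Z \<omega>) (\<xi>k \<omega>) - gl (Z \<omega>)) \<bullet> (Z \<omega> - xs))"
  proof -
    have "integrable M (\<lambda>\<omega>. f2 (W1 \<omega>, W2 \<omega>)) = integrable M (\<lambda>\<omega>. (G (Z \<omega>) (\<xi>k \<omega>) - gl (Z \<omega>)) \<bullet> (Z \<omega> - xs))"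
      by (rule Bochner_Integration.integrable_cong[OF refl]) (simp add: f2\<omega>)
    then show ?thesis using int2 by simp
  qed
  then show "integrable M (\<lambda>\<omega>. (G (Z \<omega>) (\<xi>k \<omega>) - gl (Z \<omega>)) \<bullet> (Z \<omega> - xs))" .
  have intP: "integrable (PZ \<Otimes>\<^sub>M P\<xi>) f2"
    unfolding joint using int2 by (subst integrable_distr_eq) measurable
  have "(\<integral>\<omega>. (G (Z \<omega>) (\<xi>k \<omega>) - gl (Z \<omega>)) \<bullet> (Z \<omega> - xs) \<partial>M) = (\<integral>\<omega>. f2 (W1 \<omega>, W2 \<omega>) \<partial>M)"
    by (rule Bochner_Integration.integral_cong[OF refl]) (simp add: f2\<omega>)
  also have "\<dots> = integral\<^sup>L (PZ \<Otimes>\<^sub>M P\<xi>) f2"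
    unfolding joint by (subst integral_distr) measurable
  also have "\<dots> = (\<integral>z. (\<integral>e. f2 (z, e) \<partial>P\<xi>) \<partial>PZ)"
    by (rule PP.integral_fst'[OF intP, symmetric])
  also have "\<dots> = 0"
  proof (rule integral_eq_zero_AE)
    show "AE z in PZ. (\<integral>e. f2 (z, e) \<partial>P\<xi>) = 0"
      using AEX
    proof eventually_elim
      case (elim z)
      have "(\<integral>e. f2 (z, e) \<partial>P\<xi>) = (\<integral>\<omega>. f2 (z, W2 \<omega>) \<partial>M)"
        unfolding P\<xi>_def by (subst integral_distr) (auto simp: f2_def)
      also have "\<dots> = (\<integral>\<omega>. (G (\<phi> z) (\<xi>k \<omega>) - gl (\<phi> z)) \<bullet> (\<phi> z - xs) \<partial>M)"
        using elim gl'X by (simp add: f2_def \<xi>eq)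
      also have "\<dots> = (\<integral>\<omega>. (G (\<phi> z) (\<xi>k \<omega>) - gl (\<phi> z)) \<partial>M) \<bullet> (\<phi> z - xs)"
        using unb elim by (intro integral_inner_left) auto
      also have "(\<integral>\<omega>. (G (\<phi> z) (\<xi>k \<omega>) - gl (\<phi> z)) \<partial>M) = 0"
        using unb elim by (simp add: prob_space)
      finally show ?case by simp
    qed
  qed
  finally show "(\<integral>\<omega>. (G (Z \<omega>) (\<xi>k \<omega>) - gl (Z \<omega>)) \<bullet> (Z \<omega> - xs) \<partial>M) = 0" .
qed



lemma argmax_cp:
  fixes Y :: "(real^'m) set" and F :: "real^'d^'m" and l :: "real^'d \<Rightarrow> real"
  assumes cY: "convex Y" "closed Y" and y': "y' \<in> Y" and s: "s > 0"
    and mx: "\<forall>v\<in>Y. saddle_fun l F v a - 1 / (2 * s) * (norm (v - b))\<^sup>2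
              \<le> saddle_fun l F y' a - 1 / (2 * s) * (norm (y' - b))\<^sup>2"
  shows "y' = closest_point Y (b + s *\<^sub>R (F *v a))"
proof (rule closest_point_unique[OF cY y'], intro ballI)
  fix z assume z: "z \<in> Y"
  let ?c = "b + s *\<^sub>R (F *v a)"
  have e: "(norm (v - ?c))\<^sup>2 = (norm (v - b))\<^sup>2 - 2 * s * (v \<bullet> (F *v a)) + 2 * s * (b \<bullet> (F *v a)) + s\<^sup>2 * (norm (F *v a))\<^sup>2" for v
    unfolding power2_norm_eq_inner by (simp add: inner_diff inner_add inner_commute algebra_simps power2_eq_square)
  have "z \<bullet> (F *v a) - 1 / (2 * s) * (norm (z - b))\<^sup>2 \<le> y' \<bullet> (F *v a) - 1 / (2 * s) * (norm (y' - b))\<^sup>2"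
    using mx z by (simp add: saddle_fun_def)
  then have "2 * s * (z \<bullet> (F *v a) - 1 / (2 * s) * (norm (z - b))\<^sup>2) \<le> 2 * s * (y' \<bullet> (F *v a) - 1 / (2 * s) * (norm (y' - b))\<^sup>2)"
    by (rule mult_left_mono) (use s in simp)
  then have "2 * s * (z \<bullet> (F *v a)) - (norm (z - b))\<^sup>2 \<le> 2 * s * (y' \<bullet> (F *v a)) - (norm (y' - b))\<^sup>2"
    using s by (simp add: right_diff_distrib)
  then have "(norm (y' - ?c))\<^sup>2 \<le> (norm (z - ?c))\<^sup>2" unfolding e by simp
  then have "norm (y' - ?c) \<le> norm (z - ?c)" by (rule power2_le_imp_le) simp
  then show "dist ?c y' \<le> dist ?c z" by (simp add: dist_norm norm_minus_commute)
qed

lemma bounded_integrable: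
  assumes "prob_space M" and "f \<in> borel_measurable M" and "\<forall>\<omega>. \<bar>f \<omega>\<bar> \<le> (B::real)"
  shows "integrable M f"
proof -
  interpret prob_space M by fact
  show ?thesis using assms(2,3) by (intro integrable_const_bound[where B=B]) auto
qed

theorem lemma3:
  fixes X :: "(real^'d) set" and Y :: "(real^'m) set" and F :: "real^'d^'m"
    and l :: "real^'d \<Rightarrow> real" and gl :: "real^'d \<Rightarrow> real^'d"
    and L \<mu> \<sigma> s :: real
    and M :: "'a measure" and N :: "'b measure"
    and \<xi> :: "nat \<Rightarrow> 'a \<Rightarrow> 'b"
    and G :: "real^'d \<Rightarrow> 'b \<Rightarrow> real^'d"
    and x :: "nat \<Rightarrow> 'a \<Rightarrow> real^'d" and y :: "nat \<Rightarrow> 'a \<Rightarrow> real^'m"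
    and x0 :: "real^'d" and y0 :: "real^'m"
    and xs :: "real^'d" and ys :: "real^'m"
    and k :: nat
  assumes X: "X \<noteq> {}" "convex X" "compact X"
    and Y: "Y \<noteq> {}" "convex Y" "compact Y"
    and l_deriv: "\<forall>z\<in>X. (l has_derivative (\<lambda>h. gl z \<bullet> h)) (at z within X)"
    and gl_cont: "continuous_on X gl"
    and l_convex: "convex_on X l"
    and L_nonneg: "0 \<le> L"
    and gl_lip: "\<forall>x1\<in>X. \<forall>x2\<in>X. norm (gl x1 - gl x2) \<le> L * norm (x1 - x2)"
    and mu_pos: "0 < \<mu>"
    and strong: "\<forall>u\<in>X. \<forall>v\<in>X. l v - l u - (v - u) \<bullet> gl u \<ge> \<mu> / 2 * (norm (v - u))\<^sup>2"
    and sigma_pos: "0 < \<sigma>"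
    and s_pos: "0 < s"
    and prob: "prob_space M"
    and xi_meas: "\<forall>n. \<xi> n \<in> measurable M N"
    and xi_indep: "prob_space.indep_vars M (\<lambda>_. N) \<xi> UNIV"
    and xi_ident: "\<forall>n. distr M N (\<xi> n) = distr M N (\<xi> 0)"
    and G_meas: "(\<lambda>(z, e). G z e) \<in> borel_measurable (borel \<Otimes>\<^sub>M N)"
    and G_unbiased: "\<forall>n. \<forall>z\<in>X. integrable M (\<lambda>\<omega>. G z (\<xi> n \<omega>)) \<and>
                        (\<integral>\<omega>. G z (\<xi> n \<omega>) \<partial>M) = gl z"
    and G_var: "\<forall>n. \<forall>z\<in>X. integrable M (\<lambda>\<omega>. (norm (G z (\<xi> n \<omega>) - gl z))\<^sup>2) \<and>
                        (\<integral>\<omega>. (norm (G z (\<xi> n \<omega>) - gl z))\<^sup>2 \<partial>M) \<le> \<sigma>\<^sup>2"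
    and x0_in: "x0 \<in> X" and y0_in: "y0 \<in> Y"
    and x_init: "\<forall>\<omega>. x 0 \<omega> = x0" and y_init: "\<forall>\<omega>. y 0 \<omega> = y0"
    and y_step: "\<forall>n \<omega>. y (Suc n) \<omega> \<in> Y \<and>
        (\<forall>v\<in>Y. saddle_fun l F v (x n \<omega>) - 1 / (2 * s) * (norm (v - y n \<omega>))\<^sup>2
              \<le> saddle_fun l F (y (Suc n) \<omega>) (x n \<omega>) - 1 / (2 * s) * (norm (y (Suc n) \<omega> - y n \<omega>))\<^sup>2)"
    and x_step: "\<forall>n \<omega>. x (Suc n) \<omega> = closest_point X
        (x n \<omega> - (1 / (\<mu> * (real n + 1) + L)) *\<^sub>R (G (x n \<omega>) (\<xi> n \<omega>) + transpose F *v y (Suc n) \<omega>))"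
    and saddle: "is_saddle_point (saddle_fun l F) Y X ys xs"
  shows "0 \<ge> (\<integral>\<omega>. saddle_fun l F (y (Suc k) \<omega>) xs - saddle_fun l F ys (x (Suc k) \<omega>) \<partial>M)
    \<and> (\<integral>\<omega>. saddle_fun l F (y (Suc k) \<omega>) xs - saddle_fun l F ys (x (Suc k) \<omega>) \<partial>M)
      \<ge> (\<mu> * (real k + 1) + L) / 2 * (\<integral>\<omega>. (norm (xs - x (Suc k) \<omega>))\<^sup>2 \<partial>M)
        + 1 / (2 * s) * (\<integral>\<omega>. (norm (ys - y (Suc k) \<omega>))\<^sup>2 \<partial>M)
        - (\<mu> * real k + L) / 2 * (\<integral>\<omega>. (norm (xs - x k \<omega>))\<^sup>2 \<partial>M)
        - 1 / (2 * s) * (\<integral>\<omega>. (norm (ys - y k \<omega>))\<^sup>2 \<partial>M)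
        - (lambda_max (transpose F ** F) * (diameter Y)\<^sup>2 + \<sigma>\<^sup>2) / (\<mu> * (real k + 1))"
proof -
  interpret prob_space M using prob .
  have cX: "closed X" and cY: "closed Y" and bY: "bounded Y" and bX: "bounded X"
    using X Y by (simp_all add: compact_imp_closed compact_imp_bounded)
  have Xb[measurable]: "X \<in> sets borel" using cX by simp
  have xiN[measurable]: "\<xi> n \<in> measurable M N" for n using xi_meas by simp
  have Gm[measurable]: "(\<lambda>p. G (fst p) (snd p)) \<in> borel_measurable (borel \<Otimes>\<^sub>M N)"
    using G_meas by (simp add: case_prod_beta')
  have yin: "y n \<omega> \<in> Y" for n \<omega> using y_step y0_in y_init by (cases n) auto
  have xin: "x n \<omega> \<in> X" for n \<omega>
    using x_step x0_in x_init closest_point_in_set[OF cX X(1)] by (cases n) auto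
  have ycp: "y (Suc n) \<omega> = closest_point Y (y n \<omega> + s *\<^sub>R (F *v x n \<omega>))" for n \<omega>
    using y_step argmax_cp[OF Y(2) cY _ s_pos] by blast
  define Sy where "Sy a b = closest_point Y (b + s *\<^sub>R (F *v a))" for a b
  define Sx where "Sx n a b e = closest_point X (a - (1 / (\<mu> * (real n + 1) + L)) *\<^sub>R (G a e + transpose F *v Sy a b))" for n a b e
  define xy where "xy = rec_nat (\<lambda>w. (x0, y0)) (\<lambda>n r w. (Sx n (fst (r w)) (snd (r w)) (w n), Sy (fst (r w)) (snd (r w))))"
  have xy0: "xy 0 w = (x0, y0)" for w by (simp add: xy_def)
  have xyS: "xy (Suc n) w = (Sx n (fst (xy n w)) (snd (xy n w)) (w n), Sy (fst (xy n w)) (snd (xy n w)))" for n w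
    by (simp add: xy_def)
  have Rep: "(x n \<omega>, y n \<omega>) = xy n (\<lambda>i. \<xi> i \<omega>)" for n \<omega>
  proof (induction n)
    case 0 then show ?case by (simp add: xy0 x_init y_init)
  next
    case (Suc n)
    then have e: "x n \<omega> = fst (xy n (\<lambda>i. \<xi> i \<omega>))" "y n \<omega> = snd (xy n (\<lambda>i. \<xi> i \<omega>))"
      by (metis fst_conv, metis snd_conv)
    show ?case unfolding xyS Sx_def Sy_def using x_step ycp e by simp
  qed
  have Dep: "(\<forall>i<n. w i = w' i) \<longrightarrow> xy n w = xy n w'" for n w w'
    by (induction n) (auto simp: xy0 xyS)
  have xyX: "fst (xy n w) \<in> X" for n w
    using x0_in closest_point_in_set[OF cX X(1)] by (cases n) (auto simp: xy0 xyS Sx_def)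
  have contSy: "continuous_on UNIV (\<lambda>p. closest_point Y p)"
    by (rule continuous_on_closest_point[OF Y(2) cY Y(1)])
  have contSx: "continuous_on UNIV (\<lambda>p. closest_point X p)"
    by (rule continuous_on_closest_point[OF X(2) cX X(1)])
  have contF: "continuous_on UNIV (\<lambda>v. F *v v)" "continuous_on UNIV (\<lambda>v. transpose F *v v)"
    by (rule matrix_vector_mult_linear_continuous_on)+
  have Meas: "n \<le> m \<Longrightarrow> (\<lambda>w. fst (xy n w)) \<in> borel_measurable (PiM {..<m} (\<lambda>_. N))
      \<and> (\<lambda>w. snd (xy n w)) \<in> borel_measurable (PiM {..<m} (\<lambda>_. N))" for n m
  proof (induction n)
    case 0 then show ?case by (simp add: xy0)
  next
    case (Suc n)
    then have f[measurable]: "(\<lambda>w. fst (xy n w)) \<in> borel_measurable (PiM {..<m} (\<lambda>_. N))"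
      and g[measurable]: "(\<lambda>w. snd (xy n w)) \<in> borel_measurable (PiM {..<m} (\<lambda>_. N))" by auto
    have wn[measurable]: "(\<lambda>w. w n) \<in> measurable (PiM {..<m} (\<lambda>_. N)) N"
      using Suc.prems by (intro measurable_component_singleton) auto
    have Fa[measurable]: "(\<lambda>w. F *v fst (xy n w)) \<in> borel_measurable (PiM {..<m} (\<lambda>_. N))"
      by (rule borel_measurable_continuous_on[OF contF(1) f])
    have yS[measurable]: "(\<lambda>w. Sy (fst (xy n w)) (snd (xy n w))) \<in> borel_measurable (PiM {..<m} (\<lambda>_. N))"
      unfolding Sy_def by (rule borel_measurable_continuous_on[OF contSy]) measurable
    have FyS[measurable]: "(\<lambda>w. transpose F *v Sy (fst (xy n w)) (snd (xy n w))) \<in> borel_measurable (PiM {..<m} (\<lambda>_. N))"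
      by (rule borel_measurable_continuous_on[OF contF(2) yS])
    have pr: "(\<lambda>w. (fst (xy n w), w n)) \<in> measurable (PiM {..<m} (\<lambda>_. N)) (borel \<Otimes>\<^sub>M N)" by measurable
    have Gw[measurable]: "(\<lambda>w. G (fst (xy n w)) (w n)) \<in> borel_measurable (PiM {..<m} (\<lambda>_. N))"
      using measurable_compose[OF pr Gm] by (simp add: comp_def)
    have xS: "(\<lambda>w. Sx n (fst (xy n w)) (snd (xy n w)) (w n)) \<in> borel_measurable (PiM {..<m} (\<lambda>_. N))"
      unfolding Sx_def by (rule borel_measurable_continuous_on[OF contSx]) measurable
    show ?case using xS yS by (simp add: xyS)
  qed
  define W where "W n \<omega> = restrict (\<lambda>i. \<xi> i \<omega>) {..<n}" for n \<omega>
  have Wm[measurable]: "W n \<in> measurable M (PiM {..<n} (\<lambda>_. N))" for n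
    unfolding W_def by measurable
  have xW: "x n \<omega> = fst (xy n (W n \<omega>))" "y n \<omega> = snd (xy n (W n \<omega>))" for n \<omega>
  proof -
    have "xy n (\<lambda>i. \<xi> i \<omega>) = xy n (W n \<omega>)" using Dep by (simp add: W_def)
    then show "x n \<omega> = fst (xy n (W n \<omega>))" "y n \<omega> = snd (xy n (W n \<omega>))" using Rep[of n \<omega>]
      by (metis fst_conv, metis snd_conv)
  qed
  have xm[measurable]: "x n \<in> borel_measurable M" and ym[measurable]: "y n \<in> borel_measurable M" for n
  proof -
    have "(\<lambda>\<omega>. fst (xy n (W n \<omega>))) \<in> borel_measurable M"
      using measurable_compose[OF Wm conjunct1[OF Meas[OF order_refl]]] by (simp add: comp_def)
    then show "x n \<in> borel_measurable M" by (simp add: xW[abs_def])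
    have "(\<lambda>\<omega>. snd (xy n (W n \<omega>))) \<in> borel_measurable M"
      using measurable_compose[OF Wm conjunct2[OF Meas[OF order_refl]]] by (simp add: comp_def)
    then show "y n \<in> borel_measurable M" by (simp add: xW[abs_def])
  qed
  have ind: "indep_var (PiM {..<k} (\<lambda>_. N)) (W k) (PiM {k} (\<lambda>_. N)) (\<lambda>\<omega>. restrict (\<lambda>i. \<xi> i \<omega>) {k})"
    unfolding W_def by (rule indep_var_restrict[OF xi_indep]) auto
  have h\<phi>: "(\<lambda>w. fst (xy k w)) \<in> borel_measurable (PiM {..<k} (\<lambda>_. N))"
    using Meas[OF order_refl] by blast
  have h\<psi>: "(\<lambda>w. w k) \<in> measurable (PiM {k} (\<lambda>_. N)) N"
    by (rule measurable_component_singleton) simp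
  have hZ: "\<forall>\<omega>. x k \<omega> = fst (xy k (W k \<omega>))" using xW by blast
  have h\<xi>: "\<forall>\<omega>. \<xi> k \<omega> = (\<lambda>\<omega>. restrict (\<lambda>i. \<xi> i \<omega>) {k}) \<omega> k" by simp
  have hX: "\<forall>c \<in> space (PiM {..<k} (\<lambda>_. N)). fst (xy k c) \<in> X" using xyX by blast
  have hu: "\<forall>z\<in>X. integrable M (\<lambda>\<omega>. G z (\<xi> k \<omega>)) \<and> (\<integral>\<omega>. G z (\<xi> k \<omega>) \<partial>M) = gl z"
    using G_unbiased by blast
  have hv: "\<forall>z\<in>X. integrable M (\<lambda>\<omega>. (norm (G z (\<xi> k \<omega>) - gl z))\<^sup>2) \<and>
                        (\<integral>\<omega>. (norm (G z (\<xi> k \<omega>) - gl z))\<^sup>2 \<partial>M) \<le> \<sigma>\<^sup>2"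
    using G_var by blast
  note IE = indep_expect[OF ind h\<phi> h\<psi> hZ h\<xi> hX X(3) gl_cont G_meas hu hv]
  have IE1: "integrable M (\<lambda>\<omega>. (norm (G (x k \<omega>) (\<xi> k \<omega>) - gl (x k \<omega>)))\<^sup>2)"
    by (rule IE(1))
  have IE2: "(\<integral>\<omega>. (norm (G (x k \<omega>) (\<xi> k \<omega>) - gl (x k \<omega>)))\<^sup>2 \<partial>M) \<le> \<sigma>\<^sup>2"
    by (rule IE(2))
  have IE3: "integrable M (\<lambda>\<omega>. (G (x k \<omega>) (\<xi> k \<omega>) - gl (x k \<omega>)) \<bullet> (x k \<omega> - xs))"
    by (rule IE(3))
  have IE4: "(\<integral>\<omega>. (G (x k \<omega>) (\<xi> k \<omega>) - gl (x k \<omega>)) \<bullet> (x k \<omega> - xs) \<partial>M) = 0"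
    by (rule IE(4))
  have sad1: "saddle_fun l F v xs \<le> saddle_fun l F ys xs" "saddle_fun l F ys xs \<le> saddle_fun l F ys u"
    if "v \<in> Y" "u \<in> X" for v u using saddle that unfolding is_saddle_point_def by auto
  define LHS where "LHS \<omega> = saddle_fun l F (y (Suc k) \<omega>) xs - saddle_fun l F ys (x (Suc k) \<omega>)" for \<omega>
  have LHSle: "LHS \<omega> \<le> 0" for \<omega>
    using sad1[OF yin[of "Suc k" \<omega>] xin[of "Suc k" \<omega>]] by (simp add: LHS_def)
  have part1: "0 \<ge> (\<integral>\<omega>. LHS \<omega> \<partial>M)"
  proof -
    have "0 \<le> (\<integral>\<omega>. - LHS \<omega> \<partial>M)" by (rule integral_nonneg_AE) (simp add: LHSle)
    then show ?thesis by simp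
  qed
  have lcont: "continuous_on X l" using l_deriv by (intro has_derivative_continuous_on) auto
  define l' where "l' z = indicator X z *\<^sub>R l z" for z
  have l'm[measurable]: "l' \<in> borel_measurable borel"
    unfolding l'_def using borel_measurable_continuous_on_indicator[OF Xb lcont] .
  have "bounded (l ` X)" by (rule compact_imp_bounded[OF compact_continuous_image[OF lcont X(3)]])
  then obtain Bl where "\<forall>v\<in>l ` X. norm v \<le> Bl" unfolding bounded_iff by blast
  then have Bl: "\<forall>z\<in>X. \<bar>l z\<bar> \<le> Bl" by simp
  obtain BX where BX: "\<forall>z\<in>X. norm z \<le> BX" using bX bounded_iff by blast
  obtain BY where BY: "\<forall>z\<in>Y. norm z \<le> BY" using bY bounded_iff by blast
  have lx: "l (x (Suc k) \<omega>) = l' (x (Suc k) \<omega>)" for \<omega> using xin by (simp add: l'_def)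
  have i1: "integrable M (\<lambda>\<omega>. l (x (Suc k) \<omega>))"
  proof (rule bounded_integrable[OF prob])
    show "(\<lambda>\<omega>. l (x (Suc k) \<omega>)) \<in> borel_measurable M" unfolding lx by measurable
    show "\<forall>\<omega>. \<bar>l (x (Suc k) \<omega>)\<bar> \<le> Bl" using Bl xin by blast
  qed
  have i2: "integrable M (\<lambda>\<omega>. y (Suc k) \<omega> \<bullet> (F *v xs))"
  proof (rule bounded_integrable[OF prob])
    show "(\<lambda>\<omega>. y (Suc k) \<omega> \<bullet> (F *v xs)) \<in> borel_measurable M" by measurable
    show "\<forall>\<omega>. \<bar>y (Suc k) \<omega> \<bullet> (F *v xs)\<bar> \<le> BY * norm (F *v xs)"
      using BY yin by (meson Cauchy_Schwarz_ineq2 mult_right_mono norm_ge_zero order_trans)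
  qed
  have i3e: "ys \<bullet> (F *v x (Suc k) \<omega>) = (transpose F *v ys) \<bullet> x (Suc k) \<omega>" for \<omega>
    by (simp add: dot_lmul_matrix)
  have i3: "integrable M (\<lambda>\<omega>. ys \<bullet> (F *v x (Suc k) \<omega>))"
  proof (rule bounded_integrable[OF prob])
    show "(\<lambda>\<omega>. ys \<bullet> (F *v x (Suc k) \<omega>)) \<in> borel_measurable M" unfolding i3e by measurable
    show "\<forall>\<omega>. \<bar>ys \<bullet> (F *v x (Suc k) \<omega>)\<bar> \<le> norm (transpose F *v ys) * BX"
      unfolding i3e using BX xin by (meson Cauchy_Schwarz_ineq2 mult_left_mono norm_ge_zero order_trans)
  qed
  have intL: "integrable M LHS"
  proof -
    have "LHS = (\<lambda>\<omega>. l xs + y (Suc k) \<omega> \<bullet> (F *v xs) - l (x (Suc k) \<omega>) - ys \<bullet> (F *v x (Suc k) \<omega>))"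
      by (simp add: LHS_def saddle_fun_def fun_eq_iff)
    then show ?thesis using i1 i2 i3 by simp
  qed
  have iN: "integrable M (\<lambda>\<omega>. (norm (v - z n \<omega>))\<^sup>2)"
    if zm: "z n \<in> borel_measurable M" and zb: "\<forall>\<omega>. norm (z n \<omega>) \<le> B" for v :: "real^'q" and z :: "nat \<Rightarrow> 'a \<Rightarrow> real^'q" and n B
  proof (rule bounded_integrable[OF prob])
    show "(\<lambda>\<omega>. (norm (v - z n \<omega>))\<^sup>2) \<in> borel_measurable M" using zm by measurable
    show "\<forall>\<omega>. \<bar>(norm (v - z n \<omega>))\<^sup>2\<bar> \<le> (norm v + B)\<^sup>2"
    proof
      fix \<omega>
      have "norm (v - z n \<omega>) \<le> norm v + B" using zb by (meson add_left_mono norm_triangle_ineq4 order_trans)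
      then have "(norm (v - z n \<omega>))\<^sup>2 \<le> (norm v + B)\<^sup>2" by (rule power_mono) simp
      then show "\<bar>(norm (v - z n \<omega>))\<^sup>2\<bar> \<le> (norm v + B)\<^sup>2" by simp
    qed
  qed
  have bxn: "\<forall>\<omega>. norm (x n \<omega>) \<le> BX" for n using BX xin by blast
  have byn: "\<forall>\<omega>. norm (y n \<omega>) \<le> BY" for n using BY yin by blast
  have iN1: "integrable M (\<lambda>\<omega>. (norm (xs - x (Suc k) \<omega>))\<^sup>2)" by (rule iN[OF xm bxn])
  have iN2: "integrable M (\<lambda>\<omega>. (norm (ys - y (Suc k) \<omega>))\<^sup>2)" by (rule iN[OF ym byn])
  have iN3: "integrable M (\<lambda>\<omega>. (norm (xs - x k \<omega>))\<^sup>2)" by (rule iN[OF xm bxn])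
  have iN4: "integrable M (\<lambda>\<omega>. (norm (ys - y k \<omega>))\<^sup>2)" by (rule iN[OF ym byn])
  define c where "c = \<mu> * (real k + 1) + L"
  define c0 where "c0 = \<mu> * real k + L"
  define p where "p = \<mu> * (real k + 1)"
  define K where "K = lambda_max (transpose F ** F) * (diameter Y)\<^sup>2"
  have p: "p > 0" unfolding p_def using mu_pos by (intro mult_pos_pos) auto
  define RHS where "RHS \<omega> = c / 2 * (norm (xs - x (Suc k) \<omega>))\<^sup>2 + 1 / (2 * s) * (norm (ys - y (Suc k) \<omega>))\<^sup>2
      - c0 / 2 * (norm (xs - x k \<omega>))\<^sup>2 - 1 / (2 * s) * (norm (ys - y k \<omega>))\<^sup>2
      - K / p - (norm (G (x k \<omega>) (\<xi> k \<omega>) - gl (x k \<omega>)))\<^sup>2 / p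
      + (G (x k \<omega>) (\<xi> k \<omega>) - gl (x k \<omega>)) \<bullet> (x k \<omega> - xs)" for \<omega>
  have xsX: "xs \<in> X" and ysY: "ys \<in> Y" using saddle by (simp_all add: is_saddle_point_def)
  have pw: "RHS \<omega> \<le> LHS \<omega>" for \<omega>
  proof -
    have "saddle_fun l F (y (Suc k) \<omega>) xs - saddle_fun l F ys (x (Suc k) \<omega>)
      \<ge> (\<mu> * (real k + 1) + L) / 2 * (norm (xs - x (Suc k) \<omega>))\<^sup>2
        + 1 / (2 * s) * (norm (ys - y (Suc k) \<omega>))\<^sup>2
        - (\<mu> * real k + L) / 2 * (norm (xs - x k \<omega>))\<^sup>2
        - 1 / (2 * s) * (norm (ys - y k \<omega>))\<^sup>2
        - (lambda_max (transpose F ** F) * (diameter Y)\<^sup>2 + (norm (G (x k \<omega>) (\<xi> k \<omega>) - gl (x k \<omega>)))\<^sup>2) / (\<mu> * (real k + 1))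
        + (G (x k \<omega>) (\<xi> k \<omega>) - gl (x k \<omega>)) \<bullet> (x k \<omega> - xs)"
      by (rule pointwise[OF X(2) cX Y(2) cY bY l_deriv L_nonneg gl_lip mu_pos strong s_pos
            xin[of k \<omega>] xsX ysY ycp[of k \<omega>] x_step[rule_format, of k \<omega>]])
    moreover have "(lambda_max (transpose F ** F) * (diameter Y)\<^sup>2 + (norm (G (x k \<omega>) (\<xi> k \<omega>) - gl (x k \<omega>)))\<^sup>2) / (\<mu> * (real k + 1))
        = K / p + (norm (G (x k \<omega>) (\<xi> k \<omega>) - gl (x k \<omega>)))\<^sup>2 / p"
      unfolding K_def p_def by (rule add_divide_distrib)
    ultimately show ?thesis
      unfolding RHS_def LHS_def c_def c0_def by linarith
  qed
  have intR: "integrable M RHS" unfolding RHS_def using iN1 iN2 iN3 iN4 IE1 IE3 by simp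
  have mono: "(\<integral>\<omega>. RHS \<omega> \<partial>M) \<le> (\<integral>\<omega>. LHS \<omega> \<partial>M)"
    by (rule integral_mono[OF intR intL]) (simp add: pw)
  have eqR: "(\<integral>\<omega>. RHS \<omega> \<partial>M) = c / 2 * (\<integral>\<omega>. (norm (xs - x (Suc k) \<omega>))\<^sup>2 \<partial>M)
      + 1 / (2 * s) * (\<integral>\<omega>. (norm (ys - y (Suc k) \<omega>))\<^sup>2 \<partial>M)
      - c0 / 2 * (\<integral>\<omega>. (norm (xs - x k \<omega>))\<^sup>2 \<partial>M) - 1 / (2 * s) * (\<integral>\<omega>. (norm (ys - y k \<omega>))\<^sup>2 \<partial>M)
      - K / p - (\<integral>\<omega>. (norm (G (x k \<omega>) (\<xi> k \<omega>) - gl (x k \<omega>)))\<^sup>2 \<partial>M) / p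
      + (\<integral>\<omega>. (G (x k \<omega>) (\<xi> k \<omega>) - gl (x k \<omega>)) \<bullet> (x k \<omega> - xs) \<partial>M)"
    unfolding RHS_def using iN1 iN2 iN3 iN4 IE1 IE3 by (simp add: prob_space)
  have "(\<integral>\<omega>. (norm (G (x k \<omega>) (\<xi> k \<omega>) - gl (x k \<omega>)))\<^sup>2 \<partial>M) / p \<le> \<sigma>\<^sup>2 / p"
    using IE2 p by (simp add: divide_right_mono)
  moreover have "(K + \<sigma>\<^sup>2) / p = K / p + \<sigma>\<^sup>2 / p" by (simp add: add_divide_distrib)
  ultimately have part2: "(\<integral>\<omega>. LHS \<omega> \<partial>M) \<ge> c / 2 * (\<integral>\<omega>. (norm (xs - x (Suc k) \<omega>))\<^sup>2 \<partial>M)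
      + 1 / (2 * s) * (\<integral>\<omega>. (norm (ys - y (Suc k) \<omega>))\<^sup>2 \<partial>M)
      - c0 / 2 * (\<integral>\<omega>. (norm (xs - x k \<omega>))\<^sup>2 \<partial>M) - 1 / (2 * s) * (\<integral>\<omega>. (norm (ys - y k \<omega>))\<^sup>2 \<partial>M)
      - (K + \<sigma>\<^sup>2) / p"
    using mono eqR IE4 by linarith
  show ?thesis using part1 part2 unfolding LHS_def c_def c0_def p_def K_def by simp
qed

end
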